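(* Let $s\ge2$, $\Delta=\{D_1,\dots,D_{2s+1}\}$, set $D_i=0$ for $i\le0$ and $i\ge2s+2$, and in $\mathbb Z\Delta$ let $\Sigma=\{\sigma_1,\dots,\sigma_{2s}\}$ with $\sigma_i=-D_{i-1}+D_i+D_{i+1}-D_{i+2}$ for $i\ne2s-2$ and $\sigma_{2s-2}=-D_{2s-3}+D_{2s-2}+D_{2s-1}-D_{2s}-D_{2s+1}$. Let $(D,E,F)$ be a low fundamental triple, put $\gamma=D+E-F$, and suppose $\sigma_{2s}\in\mathrm{supp}_\Sigma\gamma$. Then, up to exchanging $D$ and $E$, $(D,E,F)$ is one of: $(D_{2m+1},D_{2s},D_{2m-1}+D_{2s+1})$ for some $1\le m<s$, with $\gamma=\sum_{i=2m}^{2s}\sigma_i$; $(D_{2s},D_{2s},D_{2s-3})$ with $\gamma=\sigma_{2s-2}+\sigma_{2s-1}+2\sigma_{2s}$; $(D_{2s},D_{2s},D_{2s-2})$ with $\gamma=\sigma_{2s-1}+\sigma_{2s}$; $(D_{2s},D_{2s+1},D_{2s-1})$ with $\gamma=\sigma_{2s}$.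
   Context: For $D,E\in\mathbb Z\Delta$ write $D\le_\Sigma E$ if $E-D\in\mathbb N\Sigma$. A triple $(D,E,F)\in(\mathbb N\Delta)^3$ with $F\le_\Sigma D+E$ is low if for all $D',E'\in\mathbb N\Delta$ with $D'\le_\Sigma D$, $E'\le_\Sigma E$ and $F\le_\Sigma D'+E'$ one has $D'=D$ and $E'=E$; it is fundamental if $D,E\in\Delta$. For $\gamma=\sum a_i\sigma_i$, $\mathrm{supp}_\Sigma\gamma=\{\sigma_i:a_i>0\}$. *)

theory Defs
  imports Main "HOL-Library.Function_Algebras"
begin

text \<open>Elements of the free abelian group Z Delta on Delta = {D_1,...,D_(2s+1)} are
  represented as coefficient functions nat => int (coefficient of D_j at j),
  supported in {1..2s+1}.\<close>

type_synonym zvec = "nat \<Rightarrow> int"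

definition Dv :: "nat \<Rightarrow> nat \<Rightarrow> zvec" where
  "Dv s i = (\<lambda>j. if j = i \<and> 1 \<le> i \<and> i \<le> 2*s+1 then 1 else 0)"

definition sigma :: "nat \<Rightarrow> nat \<Rightarrow> zvec" where
  "sigma s i = (if i = 2*s - 2
     then (\<lambda>j. - Dv s (i-1) j + Dv s i j + Dv s (i+1) j - Dv s (i+2) j - Dv s (i+3) j)
     else (\<lambda>j. - Dv s (i-1) j + Dv s i j + Dv s (i+1) j - Dv s (i+2) j))"

definition in_ZDelta :: "nat \<Rightarrow> zvec \<Rightarrow> bool" where
  "in_ZDelta s X \<longleftrightarrow> (\<forall>j. X j \<noteq> 0 \<longrightarrow> 1 \<le> j \<and> j \<le> 2*s+1)"

definition in_NDelta :: "nat \<Rightarrow> zvec \<Rightarrow> bool" where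
  "in_NDelta s X \<longleftrightarrow> in_ZDelta s X \<and> (\<forall>j. X j \<ge> 0)"

definition in_Delta :: "nat \<Rightarrow> zvec \<Rightarrow> bool" where
  "in_Delta s X \<longleftrightarrow> (\<exists>i. 1 \<le> i \<and> i \<le> 2*s+1 \<and> X = Dv s i)"

definition sigma_comb :: "nat \<Rightarrow> (nat \<Rightarrow> int) \<Rightarrow> zvec" where
  "sigma_comb s a = (\<lambda>j. \<Sum>i=1..2*s. a i * sigma s i j)"

definition in_NSigma :: "nat \<Rightarrow> zvec \<Rightarrow> bool" where
  "in_NSigma s X \<longleftrightarrow> (\<exists>a. (\<forall>i. a i \<ge> 0) \<and> X = sigma_comb s a)"

definition leS :: "nat \<Rightarrow> zvec \<Rightarrow> zvec \<Rightarrow> bool" where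
  "leS s D E \<longleftrightarrow> in_NSigma s (E - D)"

definition is_low :: "nat \<Rightarrow> zvec \<Rightarrow> zvec \<Rightarrow> zvec \<Rightarrow> bool" where
  "is_low s D E F \<longleftrightarrow> in_NDelta s D \<and> in_NDelta s E \<and> in_NDelta s F \<and> leS s F (D + E) \<and>
     (\<forall>D' E'. in_NDelta s D' \<longrightarrow> in_NDelta s E' \<longrightarrow> leS s D' D \<longrightarrow> leS s E' E \<longrightarrow>
        leS s F (D' + E') \<longrightarrow> D' = D \<and> E' = E)"

definition is_fundamental :: "nat \<Rightarrow> zvec \<Rightarrow> zvec \<Rightarrow> zvec \<Rightarrow> bool" where
  "is_fundamental s D E F \<longleftrightarrow> in_Delta s D \<and> in_Delta s E"

text \<open>sigma_i lies in supp_Sigma gamma: gamma = sum a_k sigma_k with a_i > 0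
  (coefficients are unique since Sigma is linearly independent).\<close>
definition in_suppS :: "nat \<Rightarrow> nat \<Rightarrow> zvec \<Rightarrow> bool" where
  "in_suppS s i \<gamma> \<longleftrightarrow> (\<exists>a. \<gamma> = sigma_comb s a \<and> a i > 0)"

end

theory Submission
  imports Defs
begin


definition cf :: "nat \<Rightarrow> (nat \<Rightarrow> int) \<Rightarrow> nat \<Rightarrow> int" where
  "cf s b k = (if 1 \<le> k \<and> k \<le> 2*s then b k else 0)"

lemma sum_Dv_plus:
  "(\<Sum>i=1..2*s. b i * Dv s (i + d) j) = (if 1 \<le> j \<and> j \<le> 2*s+1 then cf s b (j - d) else 0)"
proof -
  have "\<And>i. b i * Dv s (i + d) j = (if i = j - d then (if d \<le> j \<and> 1 \<le> j \<and> j \<le> 2*s+1 then b i else 0) else 0)"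
    by (auto simp: Dv_def)
  then have "(\<Sum>i=1..2*s. b i * Dv s (i + d) j) = (\<Sum>i\<in>{1..2*s}. (if i = j - d then (if d \<le> j \<and> 1 \<le> j \<and> j \<le> 2*s+1 then b i else 0) else 0))"
    by simp
  also have "\<dots> = (if j - d \<in> {1..2*s} then (if d \<le> j \<and> 1 \<le> j \<and> j \<le> 2*s+1 then b (j-d) else 0) else 0)"
    by (rule sum.delta) simp
  also have "\<dots> = (if 1 \<le> j \<and> j \<le> 2*s+1 then cf s b (j - d) else 0)"
    by (auto simp: cf_def)
  finally show ?thesis .
qed

lemma sum_Dv_minus:
  "(\<Sum>i=1..2*s. b i * Dv s (i - 1) j) = (if 1 \<le> j \<and> j \<le> 2*s+1 then cf s b (j + 1) else 0)"
proof -
  have "\<And>i. b i * Dv s (i - 1) j = (if i = j + 1 then (if 1 \<le> j \<and> j \<le> 2*s+1 then b i else 0) else 0)"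
    by (auto simp: Dv_def)
  then have "(\<Sum>i=1..2*s. b i * Dv s (i - 1) j) = (\<Sum>i\<in>{1..2*s}. (if i = j + 1 then (if 1 \<le> j \<and> j \<le> 2*s+1 then b i else 0) else 0))"
    by simp
  also have "\<dots> = (if j + 1 \<in> {1..2*s} then (if 1 \<le> j \<and> j \<le> 2*s+1 then b (j+1) else 0) else 0)"
    by (rule sum.delta) simp
  also have "\<dots> = (if 1 \<le> j \<and> j \<le> 2*s+1 then cf s b (j + 1) else 0)"
    by (auto simp: cf_def)
  finally show ?thesis .
qed

lemma sum_extra:
  assumes "s \<ge> 2"
  shows "(\<Sum>i=1..2*s. b i * (if i = 2*s-2 then Dv s (i+3) j else 0)) = (if j = 2*s+1 then cf s b (2*s-2) else 0)"
proof -
  have "(\<Sum>i=1..2*s. b i * (if i = 2*s-2 then Dv s (i+3) j else 0)) = (\<Sum>i\<in>{1..2*s}. if i = 2*s-2 then b i * Dv s (i+3) j else 0)"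
    by (rule sum.cong) auto
  also have "\<dots> = b (2*s-2) * Dv s (2*s-2+3) j"
    using assms by (subst sum.delta) auto
  also have "\<dots> = (if j = 2*s+1 then cf s b (2*s-2) else 0)"
    using assms by (auto simp: Dv_def cf_def)
  finally show ?thesis .
qed

lemma sigma_alt: "sigma s i j = - Dv s (i-1) j + Dv s (i+0) j + Dv s (i+1) j - Dv s (i+2) j - (if i = 2*s-2 then Dv s (i+3) j else 0)"
  by (simp add: sigma_def)

lemma sum_Dv_plus0:
  "(\<Sum>i=1..2*s. b i * Dv s i j) = (if 1 \<le> j \<and> j \<le> 2*s+1 then cf s b j else 0)"
  using sum_Dv_plus[of b s 0 j] by simp

lemma coord:
  assumes "s \<ge> 2"
  shows "sigma_comb s b j = (if 1 \<le> j \<and> j \<le> 2*s+1 then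
     cf s b j + cf s b (j-1) - cf s b (j+1) - cf s b (j-2) - (if j = 2*s+1 then cf s b (2*s-2) else 0) else 0)"
proof -
  have "sigma_comb s b j = (\<Sum>i=1..2*s. - (b i * Dv s (i-1) j) + b i * Dv s i j + b i * Dv s (i+1) j - b i * Dv s (i+2) j - b i * (if i = 2*s-2 then Dv s (i+3) j else 0))"
    unfolding sigma_comb_def sigma_alt by (rule sum.cong) (auto simp: algebra_simps)
  also have "\<dots> = - (\<Sum>i=1..2*s. b i * Dv s (i-1) j) + (\<Sum>i=1..2*s. b i * Dv s i j) + (\<Sum>i=1..2*s. b i * Dv s (i+1) j) - (\<Sum>i=1..2*s. b i * Dv s (i+2) j) - (\<Sum>i=1..2*s. b i * (if i = 2*s-2 then Dv s (i+3) j else 0))"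
    by (simp add: sum.distrib sum_subtractf sum_negf)
  also have "\<dots> = (if 1 \<le> j \<and> j \<le> 2*s+1 then
     cf s b j + cf s b (j-1) - cf s b (j+1) - cf s b (j-2) - (if j = 2*s+1 then cf s b (2*s-2) else 0) else 0)"
    unfolding sum_Dv_minus sum_Dv_plus0 sum_Dv_plus sum_extra[OF assms] by auto
  finally show ?thesis .
qed

lemma sc_diff: "sigma_comb s (\<lambda>i. x i - y i) j = sigma_comb s x j - sigma_comb s y j"
  by (simp add: sigma_comb_def sum_subtractf left_diff_distrib)

lemma sc_unique:
  assumes s2: "s \<ge> 2" and eq: "sigma_comb s x = sigma_comb s y" and i: "1 \<le> i" "i \<le> 2*s"
  shows "x i = y i"
proof -
  define z where "z = (\<lambda>i. x i - y i)"
  have z0: "sigma_comb s z j = 0" for j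
    using eq unfolding z_def sc_diff by simp
  have rec: "cf s z (j+1) = cf s z j + cf s z (j-1) - cf s z (j-2)" if "1 \<le> j" "j \<le> 2*s" for j
  proof -
    have "cf s z j + cf s z (j-1) - cf s z (j+1) - cf s z (j-2) = 0"
      using coord[OF s2, of z j] z0[of j] that by simp
    then show ?thesis by linarith
  qed
  define c where "c = cf s z 1"
  have pair: "cf s z (2*n) = c * int n \<and> cf s z (2*n+1) = c * (int n + 1) \<and> cf s z (2*n - 1) = c * int n" if "n \<le> s" for n
    using that
  proof (induction n)
    case 0
    then show ?case by (simp add: cf_def c_def)
  next
    case (Suc n)
    then have IH: "cf s z (2*n) = c * int n" "cf s z (2*n+1) = c * (int n + 1)" "cf s z (2*n - 1) = c * int n"
      by auto
    have r1: "cf s z (2*n+1+1) = cf s z (2*n+1) + cf s z (2*n+1-1) - cf s z (2*n+1-2)"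
      using Suc.prems by (intro rec) auto
    have r2: "cf s z (2*n+2+1) = cf s z (2*n+2) + cf s z (2*n+2-1) - cf s z (2*n+2-2)"
      using Suc.prems by (intro rec) auto
    have x1: "2*n+1+1 = 2*Suc n" "2*n+1-1 = 2*n" "2*n+1-2 = 2*n - 1" "2*n+2+1 = 2*Suc n + 1"
      "2*n+2 = 2*Suc n" "2*n+2-1 = 2*n+1" "2*n+2-2 = 2*n" "2*Suc n - 1 = 2*n+1" by auto
    have a: "cf s z (2*Suc n) = c * (int n + 1)" using r1 IH unfolding x1 by simp
    have b: "cf s z (2*Suc n + 1) = c * (int n + 2)" using r2 IH a unfolding x1 by (simp add: algebra_simps)
    show ?case using a b IH unfolding x1 by (simp add: algebra_simps)
  qed
  have closed: "cf s z k = c * int ((k+1) div 2)" if "k \<le> 2*s+1" for k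
  proof (cases "even k")
    case True
    then obtain n where n: "k = 2*n" by (auto elim: evenE)
    then have "n \<le> s" using that by simp
    then show ?thesis using pair[of n] n by simp
  next
    case False
    then obtain n where n: "k = 2*n+1" by (auto elim: oddE)
    then have "n \<le> s" using that by simp
    then have "cf s z k = c * (int n + 1)" using pair[of n] n by simp
    moreover have "(k+1) div 2 = n + 1" using n by simp
    ultimately show ?thesis by simp
  qed
  have "cf s z (2*s+1) = 0" by (simp add: cf_def)
  then have "c * int (s+1) = 0" using closed[of "2*s+1"] by simp
  then have "c = 0" by simp
  then have "cf s z i = 0" using closed[of i] i by simp
  then show ?thesis using i by (simp add: cf_def z_def)
qed



definition cnt :: "nat \<Rightarrow> nat \<Rightarrow> int" where
  "cnt x k = (if x \<le> k then int ((k - x) div 2) + 1 else 0)"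

lemma cnt_step: "1 \<le> x \<Longrightarrow> 1 \<le> k \<Longrightarrow> cnt x k = cnt x (k-2) + (if x \<le> k then 1 else 0)"
proof -
  assume x: "1 \<le> x" and k: "1 \<le> k"
  consider "x \<le> k - 2" | "k - 2 < x \<and> x \<le> k" | "k < x" by linarith
  then show ?thesis
  proof cases
    case 1
    then have "k - x = (k - 2 - x) + 2" using x by arith
    then have "(k - x) div 2 = (k - 2 - x) div 2 + 1" by simp
    then show ?thesis using 1 x k by (simp add: cnt_def)
  next
    case 2
    then have "(k - x) div 2 = 0" by presburger
    then show ?thesis using 2 by (simp add: cnt_def)
  next
    case 3 then show ?thesis by (simp add: cnt_def)
  qed
qed

lemma cnt_odd: "cnt x (2*K+1) = max 0 (int K + 1 - int (x div 2))"
proof (cases "x \<le> 2*K+1")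
  case True
  then have "(2*K+1 - x) div 2 + x div 2 = K" by presburger
  then show ?thesis using True by (simp add: cnt_def max_def)
next
  case False
  then have "K + 1 \<le> x div 2" by presburger
  then show ?thesis using False by (simp add: cnt_def max_def)
qed

lemma cnt_even: "1 \<le> x \<Longrightarrow> cnt x (2*K) = max 0 (int K - int ((x - 1) div 2))"
proof (cases "x \<le> 2*K")
  case True
  assume "1 \<le> x"
  then have "(2*K - x) div 2 + 1 + (x - 1) div 2 = K" using True by presburger
  then show ?thesis using True by (simp add: cnt_def max_def)
next
  case False
  assume "1 \<le> x"
  then have "K \<le> (x - 1) div 2" using False by presburger
  then show ?thesis using False by (simp add: cnt_def max_def)
qed

lemma lowlem:
  fixes K e1 e2 eP eQ :: int
  assumes "e1 \<le> e2" "eP \<le> eQ" "e1 \<le> eP" "eP \<le> K" "eP + eQ - e1 - e2 \<ge> 1" "K \<ge> eQ \<or> e1 < eP"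
  shows "max 0 (K-e1) + max 0 (K-e2) - max 0 (K-eP) - max 0 (K-eQ) \<ge> 1"
proof -
  have a: "max 0 (K-e1) = K - e1" "max 0 (K-eP) = K - eP" using assms by auto
  show ?thesis
  proof (cases "K \<ge> e2")
    case True
    show ?thesis
    proof (cases "K \<ge> eQ")
      case True2: True
      then have "max 0 (K-e2) = K-e2" "max 0 (K-eQ) = K - eQ" using True by auto
      then show ?thesis using a assms by linarith
    next
      case False
      then have "max 0 (K-e2) = K-e2" "max 0 (K-eQ) = 0" using True by auto
      then show ?thesis using a assms False True by linarith
    qed
  next
    case False
    show ?thesis
    proof (cases "K \<ge> eQ")
      case True2: True
      then have "max 0 (K-e2) = 0" "max 0 (K-eQ) = K - eQ" using False by auto
      then show ?thesis using a assms False by linarith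
    next
      case False2: False
      then have "max 0 (K-e2) = 0" "max 0 (K-eQ) = 0" using False by auto
      then show ?thesis using a assms False False2 by linarith
    qed
  qed
qed

definition ind :: "bool \<Rightarrow> int" where "ind b = (if b then 1 else 0)"

lemma indT:
  assumes "ind a + ind b - ind c - ind d \<ge> 1"
  shows "d \<Longrightarrow> a \<and> b \<and> \<not> c" "c \<Longrightarrow> a \<and> b \<and> \<not> d" "\<not> b \<Longrightarrow> a \<and> \<not> c \<and> \<not> d"
    "\<not> d \<Longrightarrow> \<not> c \<or> a"
  using assms unfolding ind_def by (auto split: if_splits)


lemma cnt_odd': "cnt x (Suc (2*K)) = max 0 (int K + 1 - int (x div 2))"
  using cnt_odd[of x K] by simp

lemma half_le: "x \<le> 2*s+2 \<Longrightarrow> int (x div 2) \<le> int s + 1"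
proof -
  assume "x \<le> 2*s+2"
  then have "x div 2 \<le> (2*s+2) div 2" by (rule div_le_mono)
  then show ?thesis by simp
qed

lemma halfm_le: "x \<le> 2*s+2 \<Longrightarrow> int ((x-1) div 2) \<le> int s"
proof -
  assume "x \<le> 2*s+2"
  then have "(x-1) div 2 \<le> (2*s+1) div 2" by (intro div_le_mono) simp
  then show ?thesis by simp
qed

lemma par_nat: "1 \<le> (x::nat) \<Longrightarrow> (x-1) div 2 + (if even x then 1 else 0) = x div 2"
  by presburger

lemma par_rel: "1 \<le> x \<Longrightarrow> int ((x-1) div 2) = int (x div 2) - ind (even x)"
proof -
  assume "1 \<le> x"
  from par_nat[OF this] have "int ((x-1) div 2) + int (if even x then 1 else 0) = int (x div 2)"
    by (metis of_nat_add)
  then show ?thesis by (auto simp: ind_def split: if_splits)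
qed

lemma half_eq_even: "(x::nat) div 2 = y div 2 \<Longrightarrow> even x \<Longrightarrow> odd y \<Longrightarrow> y = x + 1"
  by presburger

lemma half_eq_even2: "(x::nat) div 2 + 1 = y div 2 \<Longrightarrow> even x \<Longrightarrow> even y \<Longrightarrow> x + 2 = y"
  by presburger

lemma half_s: "(x::nat) div 2 = s \<Longrightarrow> x \<ge> 2*s"
  by presburger

lemma half_s1: "(x::nat) div 2 = s + 1 \<Longrightarrow> x \<le> 2*s+2 \<Longrightarrow> x = 2*s+2"
  by presburger

lemma half_sm1: "(x::nat) div 2 + 1 = s \<Longrightarrow> x = 2*s-2 \<or> x = 2*s-1"
  by presburger

lemma hA: "odd ((q::nat)+1) \<Longrightarrow> q \<le> 2*s-1 \<Longrightarrow> q \<le> 2*s-2" by presburger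
lemma hB: "odd ((p::nat)+1) \<Longrightarrow> p+1 \<le> 2*s \<Longrightarrow> p \<le> 2*s-2" by presburger
lemma hC: "even (p::nat) \<Longrightarrow> \<not> p \<le> 2*s-2 \<Longrightarrow> p \<le> 2*s \<Longrightarrow> p = 2*s" by presburger
lemma hD: "odd ((p::nat)+1) \<Longrightarrow> p+1 \<le> 2*s+2 \<Longrightarrow> p \<le> 2*s" by presburger
lemma half_ge: "s \<le> (x::nat) div 2 \<Longrightarrow> 2*s \<le> x" by presburger

lemma core:
  fixes s j1 j2 p q :: nat and A :: "nat \<Rightarrow> int"
  assumes s2: "s \<ge> 2" and j: "1 \<le> j1" "j1 \<le> j2" "j2 \<le> 2*s+2"
    and pq: "1 \<le> p" "p \<le> q" "q \<le> 2*s+1"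
    and Adef: "\<And>k. A k = cnt j1 k + cnt j2 k - cnt (p+1) k - cnt (q+1) k"
    and A1: "A (2*s+1) = 0" and A2: "A (2*s) \<ge> 1" and Apos: "\<And>k. k \<le> 2*s+1 \<Longrightarrow> A k \<ge> 0"
    and top: "ind (j1 \<le> 2*s) + ind (j2 \<le> 2*s) - ind (p+1 \<le> 2*s) - ind (q+1 \<le> 2*s)
             + (ind (j1 \<le> 2*s+1) + ind (j2 \<le> 2*s+1) - ind (p+1 \<le> 2*s+1) - ind (q+1 \<le> 2*s+1))
             \<le> ind (p = 2*s+1) + ind (q = 2*s+1)"
    and lowp: "even p \<Longrightarrow> p \<le> 2*s-2 \<Longrightarrow> \<exists>k. even k \<and> p \<le> k \<and> k \<le> 2*s \<and> A k \<le> 0"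
    and lowq: "even q \<Longrightarrow> q \<le> 2*s-2 \<Longrightarrow> \<exists>k. even k \<and> q \<le> k \<and> k \<le> 2*s \<and> A k \<le> 0"
  shows "(\<exists>m. 1 \<le> m \<and> m < s \<and> p = 2*m+1 \<and> q = 2*s \<and> j1 = 2*m \<and> j2 = 2*s+2)
       \<or> (p = 2*s \<and> q = 2*s \<and> j1 = 2*s-2 \<and> j2 = 2*s+2)
       \<or> (p = 2*s \<and> q = 2*s \<and> j1 = 2*s-1 \<and> j2 = 2*s+2)
       \<or> (p = 2*s \<and> q = 2*s+1 \<and> j1 = 2*s \<and> j2 = 2*s+2)"
proof -
  define P where "P = p + 1"
  define Q where "Q = q + 1"
  define o1 where "o1 = int (j1 div 2)"
  define o2 where "o2 = int (j2 div 2)"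
  define oP where "oP = int (P div 2)"
  define oQ where "oQ = int (Q div 2)"
  define e1 where "e1 = int ((j1 - 1) div 2)"
  define e2 where "e2 = int ((j2 - 1) div 2)"
  define eP where "eP = int ((P - 1) div 2)"
  define eQ where "eQ = int ((Q - 1) div 2)"
  have PQ: "2 \<le> P" "P \<le> Q" "Q \<le> 2*s+2" using pq by (auto simp: P_def Q_def)
  have Aodd: "A (2*K+1) = max 0 (int K + 1 - o1) + max 0 (int K + 1 - o2) - max 0 (int K + 1 - oP) - max 0 (int K + 1 - oQ)" for K
    using Adef[of "2*K+1"] cnt_odd[of j1 K] cnt_odd[of j2 K] cnt_odd[of "p+1" K] cnt_odd[of "q+1" K]
    unfolding o1_def o2_def oP_def oQ_def P_def Q_def by linarith
  have Aeven: "A (2*K) = max 0 (int K - e1) + max 0 (int K - e2) - max 0 (int K - eP) - max 0 (int K - eQ)" for K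
  proof -
    have "1 \<le> j2" "1 \<le> P" "1 \<le> Q" using j PQ by auto
    then show ?thesis
      using Adef[of "2*K"] cnt_even[of j1 K] cnt_even[of j2 K] cnt_even[of P K] cnt_even[of Q K] j(1)
      by (simp add: e1_def e2_def eP_def eQ_def P_def Q_def)
  qed
  have ob: "o1 \<le> int s + 1" "o2 \<le> int s + 1" "oP \<le> int s + 1" "oQ \<le> int s + 1"
    unfolding o1_def o2_def oP_def oQ_def using j PQ by (auto intro!: half_le)
  have eb: "e1 \<le> int s" "e2 \<le> int s" "eP \<le> int s" "eQ \<le> int s"
    unfolding e1_def e2_def eP_def eQ_def using j PQ by (auto intro!: halfm_le)
  have mono: "o1 \<le> o2" "e1 \<le> e2" "oP \<le> oQ" "eP \<le> eQ"
    unfolding o1_def o2_def oP_def oQ_def e1_def e2_def eP_def eQ_def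
    using j PQ by (auto intro!: div_le_mono)
  have par1: "e1 = o1 - ind (even j1)" using j unfolding e1_def o1_def by (intro par_rel) simp
  have par2: "e2 = o2 - ind (even j2)" using j unfolding e2_def o2_def by (intro par_rel) simp
  have parP: "eP = oP - ind (even P)" using PQ unfolding eP_def oP_def by (intro par_rel) simp
  have parQ: "eQ = oQ - ind (even Q)" using PQ unfolding eQ_def oQ_def by (intro par_rel) simp
  have S1: "o1 + o2 = oP + oQ"
  proof -
    have m: "max 0 (int s + 1 - o1) = int s + 1 - o1" "max 0 (int s + 1 - o2) = int s + 1 - o2"
      "max 0 (int s + 1 - oP) = int s + 1 - oP" "max 0 (int s + 1 - oQ) = int s + 1 - oQ"
      using ob by simp_all
    show ?thesis using A1 Aodd[of s] unfolding m by linarith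
  qed
  have S2: "eP + eQ - e1 - e2 \<ge> 1"
  proof -
    have m: "max 0 (int s - e1) = int s - e1" "max 0 (int s - e2) = int s - e2"
      "max 0 (int s - eP) = int s - eP" "max 0 (int s - eQ) = int s - eQ"
      using eb by simp_all
    show ?thesis using A2 Aeven[of s] unfolding m by linarith
  qed
  have S3: "o1 \<le> oP"
  proof (rule ccontr)
    assume c: "\<not> o1 \<le> oP"
    then have o11: "o1 \<ge> 1" using oP_def by simp
    define K where "K = nat (o1 - 1)"
    have KK: "int K + 1 = o1" using K_def o11 by simp
    have "2*K+1 \<le> 2*s+1" using KK ob by linarith
    then have "A (2*K+1) \<ge> 0" by (rule Apos)
    moreover have "A (2*K+1) = max 0 (o1 - o1) + max 0 (o1 - o2) - max 0 (o1 - oP) - max 0 (o1 - oQ)"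
      using Aodd[of K] KK by simp
    moreover have "max 0 (o1 - o1) = 0" "max 0 (o1 - o2) = 0" "max 0 (o1 - oP) = o1 - oP" "max 0 (o1 - oQ) \<ge> 0"
      using mono c by auto
    ultimately show False using c by linarith
  qed
  have S4: "e1 \<le> eP"
  proof (rule ccontr)
    assume c: "\<not> e1 \<le> eP"
    then have e11: "e1 \<ge> 1" using eP_def by simp
    define K where "K = nat e1"
    have KK: "int K = e1" using K_def e11 by simp
    have "2*K \<le> 2*s+1" using KK eb by linarith
    then have "A (2*K) \<ge> 0" by (rule Apos)
    moreover have "A (2*K) = max 0 (e1 - e1) + max 0 (e1 - e2) - max 0 (e1 - eP) - max 0 (e1 - eQ)"
      using Aeven[of K] KK by simp
    moreover have "max 0 (e1 - e1) = 0" "max 0 (e1 - e2) = 0" "max 0 (e1 - eP) = e1 - eP" "max 0 (e1 - eQ) \<ge> 0"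
      using mono c by auto
    ultimately show False using c by linarith
  qed
  have T: "ind (even j1) + ind (even j2) - ind (even P) - ind (even Q) \<ge> 1"
    using S1 S2 par1 par2 parP parQ by linarith
  have lowc: False if r: "r = p \<or> r = q" and re: "even r" "r \<le> 2*s-2"
     and cond: "eQ \<le> int (r div 2) \<or> e1 < eP" and rP: "eP \<le> int (r div 2)" for r
  proof -
    obtain k where k: "even k" "r \<le> k" "k \<le> 2*s" "A k \<le> 0"
      using r re lowp lowq by blast
    define K where "K = k div 2"
    have kK: "k = 2*K" using k K_def by simp
    have "r div 2 \<le> K" using k K_def by (simp add: div_le_mono)
    then have rK: "int (r div 2) \<le> int K" by simp
    have c6: "int K \<ge> eQ \<or> e1 < eP" using cond rK by linarith
    have c4: "eP \<le> int K" using rP rK by linarith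
    have "max 0 (int K - e1) + max 0 (int K - e2) - max 0 (int K - eP) - max 0 (int K - eQ) \<ge> 1"
      by (rule lowlem[OF mono(2) mono(4) S4 c4 S2 c6])
    then show False using Aeven[of K] k kK by simp
  qed
  consider "q \<le> 2*s - 1" | "q = 2*s" | "q = 2*s+1" using pq by linarith
  then show ?thesis
  proof cases
    case 1
    show ?thesis
    proof (cases "odd Q")
      case True
      then have "odd (q+1)" using Q_def by simp
      then have qe: "even q" "q \<le> 2*s - 2" using hA[of q s] 1 by auto
      have eQq: "eQ = int (q div 2)" using Q_def eQ_def by simp
      have False
      proof (rule lowc[of q])
        show "q = p \<or> q = q" by simp
        show "even q" by (rule qe(1))
        show "q \<le> 2*s-2" by (rule qe(2))
        show "eQ \<le> int (q div 2) \<or> e1 < eP" using eQq by simp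
        show "eP \<le> int (q div 2)" using eQq mono(4) by simp
      qed
      then show ?thesis by simp
    next
      case False
      then have "even j1" "odd P" using indT(1)[OF T] by auto
      have "p + 1 \<le> 2*s" using PQ(2) Q_def P_def 1 s2 by arith
      moreover have "odd (p+1)" using \<open>odd P\<close> P_def by simp
      ultimately have pe: "even p" "p \<le> 2*s - 2" using hB[of p s] by auto
      have ePp: "eP = int (p div 2)" using P_def eP_def by simp
      have "e1 < eP" using par1 parP S3 \<open>odd P\<close> \<open>even j1\<close> by (simp add: ind_def)
      have False
      proof (rule lowc[of p])
        show "p = p \<or> p = q" by simp
        show "even p" by (rule pe(1))
        show "p \<le> 2*s-2" by (rule pe(2))
        show "eQ \<le> int (p div 2) \<or> e1 < eP" using \<open>e1 < eP\<close> by simp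
        show "eP \<le> int (p div 2)" using ePp by simp
      qed
      then show ?thesis by simp
    qed
  next
    case 2
    then have oQs: "oQ = int s" "eQ = int s" "odd Q" using Q_def oQ_def eQ_def by auto
    have "o2 \<ge> int s" using S1 S3 oQs by linarith
    then have "j2 div 2 \<ge> s" using o2_def by simp
    then have j2s: "j2 \<ge> 2*s" by (rule half_ge)
    show ?thesis
    proof (cases "j2 \<le> 2*s+1")
      case True
      have Ps: "P \<le> 2*s+1" using PQ 2 Q_def by simp
      have i1: "ind (j1 \<le> 2*s+1) = 1" "ind (j2 \<le> 2*s+1) = 1" "ind (p+1 \<le> 2*s+1) = 1" "ind (q+1 \<le> 2*s+1) = 1"
        "ind (q+1 \<le> 2*s) = 0" "ind (p = 2*s+1) = 0" "ind (q = 2*s+1) = 0"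
        using True j Ps P_def 2 by (simp_all add: ind_def)
      have top': "ind (j1 \<le> 2*s) + ind (j2 \<le> 2*s) \<le> ind (P \<le> 2*s)"
        using top unfolding i1 P_def by simp
      have j2v: "j2 = 2*s+1"
      proof (rule ccontr)
        assume "j2 \<noteq> 2*s+1"
        then have "j2 \<le> 2*s" "j1 \<le> 2*s" using True j by auto
        then show False using top' by (simp add: ind_def split: if_splits)
      qed
      then have "o2 = int s" "e2 = int s" using o2_def e2_def by auto
      then have "o1 = oP" using S1 oQs by simp
      have "odd j2" using j2v by simp
      then have "even j1" "odd P" using indT(3)[OF T] by auto
      then have "j1 \<noteq> 2*s+1" by auto
      then have "j1 \<le> 2*s" using j j2v by linarith
      then have "P \<le> 2*s" using top' by (simp add: ind_def split: if_splits)
      then have pe: "even p" "p \<le> 2*s-2" using hB[of p s] \<open>odd P\<close> P_def by auto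
      have ePp: "eP = int (p div 2)" using P_def eP_def by simp
      have "e1 < eP" using par1 parP \<open>o1 = oP\<close> \<open>even j1\<close> \<open>odd P\<close> by (simp add: ind_def)
      have False
      proof (rule lowc[of p])
        show "p = p \<or> p = q" by simp
        show "even p" by (rule pe(1))
        show "p \<le> 2*s-2" by (rule pe(2))
        show "eQ \<le> int (p div 2) \<or> e1 < eP" using \<open>e1 < eP\<close> by simp
        show "eP \<le> int (p div 2)" using ePp by simp
      qed
      then show ?thesis by simp
    next
      case False
      then have j2v: "j2 = 2*s+2" using j by simp
      then have "o2 = int s + 1" "e2 = int s" using o2_def e2_def by auto
      then have o1P: "o1 = oP - 1" using S1 oQs by simp
      show ?thesis
      proof (cases "even P")
        case True
        then have "even j1" using indT(2)[OF T] by auto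
        have "j1 div 2 + 1 = P div 2" using o1P o1_def oP_def by simp
        then have jP: "j1 + 2 = P" using half_eq_even2 True \<open>even j1\<close> by blast
        define m where "m = j1 div 2"
        have jm: "j1 = 2*m" using \<open>even j1\<close> m_def by simp
        moreover have "1 \<le> m" using j jm by simp
        moreover have "m < s" using jP PQ 2 Q_def jm by linarith
        moreover have "p = 2*m+1" using jP P_def jm by simp
        ultimately show ?thesis using 2 j2v by blast
      next
        case False
        then have pe: "even p" using P_def by simp
        have ePp: "eP = int (p div 2)" using P_def eP_def by simp
        have "e1 < eP" using par1 parP o1P False by (simp add: ind_def)
        have "\<not> p \<le> 2*s-2"
        proof
          assume pl: "p \<le> 2*s-2"
          show False
          proof (rule lowc[of p])
            show "p = p \<or> p = q" by simp
            show "even p" by (rule pe)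
            show "p \<le> 2*s-2" by (rule pl)
            show "eQ \<le> int (p div 2) \<or> e1 < eP" using \<open>e1 < eP\<close> by simp
            show "eP \<le> int (p div 2)" using ePp by simp
          qed
        qed
        then have "p = 2*s" using hC[of p s] pe pq 2 by auto
        then have "P = 2*s+1" "oP = int s" using P_def oP_def by auto
        then have "j1 div 2 + 1 = s" using o1P o1_def by simp
        then have "j1 = 2*s-2 \<or> j1 = 2*s-1" by (rule half_sm1)
        then show ?thesis using \<open>p = 2*s\<close> 2 j2v by auto
      qed
    qed
  next
    case 3
    then have oQs: "oQ = int s + 1" "eQ = int s" using Q_def oQ_def eQ_def by auto
    have "o2 = int s + 1" using S1 S3 oQs ob by linarith
    then have "j2 div 2 = s + 1" using o2_def by simp
    then have j2v: "j2 = 2*s+2" using half_s1 j by blast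
    then have "e2 = int s" using e2_def by simp
    have "o1 = oP" using S1 oQs \<open>o2 = int s + 1\<close> by simp
    have "even Q" using 3 Q_def by simp
    have "even j1" "odd P" using indT(1)[OF T] \<open>even Q\<close> by auto
    then have pe: "even p" using P_def by simp
    have ePp: "eP = int (p div 2)" using P_def eP_def by simp
    have "e1 < eP" using par1 parP \<open>o1 = oP\<close> \<open>even j1\<close> \<open>odd P\<close> by (simp add: ind_def)
    have "\<not> p \<le> 2*s-2"
    proof
      assume pl: "p \<le> 2*s-2"
      show False
      proof (rule lowc[of p])
        show "p = p \<or> p = q" by simp
        show "even p" by (rule pe)
        show "p \<le> 2*s-2" by (rule pl)
        show "eQ \<le> int (p div 2) \<or> e1 < eP" using \<open>e1 < eP\<close> by simp
        show "eP \<le> int (p div 2)" using ePp by simp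
      qed
    qed
    have "odd (p+1)" using \<open>odd P\<close> P_def by simp
    moreover have "p + 1 \<le> 2*s+2" using pq by simp
    ultimately have "p \<le> 2*s" by (rule hD)
    then have "p = 2*s" using hC[of p s] pe \<open>\<not> p \<le> 2*s-2\<close> by auto
    have "j1 div 2 = P div 2" using \<open>o1 = oP\<close> o1_def oP_def by simp
    then have "P = j1 + 1" using half_eq_even \<open>even j1\<close> \<open>odd P\<close> by blast
    then have "j1 = 2*s" using \<open>p = 2*s\<close> P_def by simp
    then show ?thesis using \<open>p = 2*s\<close> 3 j2v by auto
  qed
qed

lemma mono_chain:
  fixes g :: "nat \<Rightarrow> int"
  assumes m: "\<And>j. 1 \<le> j \<Longrightarrow> j < N \<Longrightarrow> g j \<le> g (j+1)"
  shows "1 \<le> i \<Longrightarrow> i \<le> k \<Longrightarrow> k \<le> N \<Longrightarrow> g i \<le> g k"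
proof (induction k)
  case 0 then show ?case by simp
next
  case (Suc k)
  show ?case
  proof (cases "i = Suc k")
    case True then show ?thesis by simp
  next
    case False
    then have ik: "i \<le> k" using Suc.prems by simp
    then have "g i \<le> g k" using Suc.IH Suc.prems by simp
    also have "g k \<le> g (k+1)" using m[of k] Suc.prems ik by simp
    finally show ?thesis by simp
  qed
qed

lemma thresh:
  fixes g :: "nat \<Rightarrow> int"
  assumes m: "\<And>j. 1 \<le> j \<Longrightarrow> j < N \<Longrightarrow> g j \<le> g (j+1)"
  shows "\<exists>t. 1 \<le> t \<and> t \<le> N+1 \<and> (\<forall>i. 1 \<le> i \<longrightarrow> i \<le> N \<longrightarrow> (c \<le> g i \<longleftrightarrow> t \<le> i))"
proof -
  define Pr where "Pr = (\<lambda>t. 1 \<le> t \<and> (t = N+1 \<or> (t \<le> N \<and> c \<le> g t)))"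
  have ex: "Pr (N+1)" by (simp add: Pr_def)
  define t where "t = (LEAST t. Pr t)"
  have Pt: "Pr t" unfolding t_def by (rule LeastI, rule ex)
  have tle: "\<And>t'. Pr t' \<Longrightarrow> t \<le> t'" unfolding t_def by (rule Least_le)
  have "t \<le> N+1" using tle[OF ex] .
  moreover have "1 \<le> t" using Pt Pr_def by simp
  moreover have "\<forall>i. 1 \<le> i \<longrightarrow> i \<le> N \<longrightarrow> (c \<le> g i \<longleftrightarrow> t \<le> i)"
  proof (intro allI impI)
    fix i assume i: "1 \<le> i" "i \<le> N"
    show "c \<le> g i \<longleftrightarrow> t \<le> i"
    proof
      assume "c \<le> g i"
      then have "Pr i" using i by (simp add: Pr_def)
      then show "t \<le> i" by (rule tle)
    next
      assume ti: "t \<le> i"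
      then have "t \<noteq> N+1" using i by simp
      then have "t \<le> N" "c \<le> g t" "1 \<le> t" using Pt by (auto simp: Pr_def)
      then show "c \<le> g i" using mono_chain[where g=g and N=N, OF m, of t i] ti i by simp
    qed
  qed
  ultimately show ?thesis by blast
qed

lemma is_low_sym: "is_low s D E F \<Longrightarrow> is_low s E D F"
  unfolding is_low_def by (metis add.commute)

lemma Dv_NDelta: "1 \<le> r \<Longrightarrow> r \<le> 2*s+1 \<Longrightarrow> in_NDelta s (Dv s r)"
  by (auto simp: in_NDelta_def in_ZDelta_def Dv_def)

lemma par_aux1: "even (j::nat) \<Longrightarrow> even r \<Longrightarrow> r \<le> j \<Longrightarrow> \<not> r \<le> j - 2 \<Longrightarrow> j = r"
  by presburger

lemma Dv_drop:
  assumes s2: "s \<ge> 2" and r: "even r" "2 \<le> r" "r \<le> 2*s-2"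
  shows "Dv s r - Dv s (r-1) = sigma_comb s (\<lambda>i. if even i \<and> r \<le> i \<and> i \<le> 2*s then 1 else 0)"
proof
  fix j
  define c where "c = (\<lambda>i::nat. if even i \<and> r \<le> i \<and> i \<le> 2*s then (1::int) else 0)"
  have cf_c: "cf s c k = (if even k \<and> r \<le> k \<and> k \<le> 2*s then 1 else 0)" for k
    using r by (auto simp: cf_def c_def)
  have lhs: "(Dv s r - Dv s (r-1)) j = ind (j = r) - ind (j = r - 1)"
    using r s2 by (auto simp: Dv_def ind_def)
  show "(Dv s r - Dv s (r-1)) j = sigma_comb s (\<lambda>i. if even i \<and> r \<le> i \<and> i \<le> 2*s then 1 else 0) j"
  proof (cases "1 \<le> j \<and> j \<le> 2*s+1")
    case False
    then show ?thesis using r lhs coord[OF s2, of _ j] by (auto simp: ind_def)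
  next
    case True
    have rhs: "sigma_comb s c j = cf s c j + cf s c (j-1) - cf s c (j+1) - cf s c (j-2) - (if j = 2*s+1 then cf s c (2*s-2) else 0)"
      using coord[OF s2, of c j] True by simp
    show ?thesis
    proof (cases "even j")
      case True2: True
      have o1: "odd (j-1)" "odd (j+1)" "even (j-2)" using True True2 by auto
      have jn: "j \<noteq> 2*s+1" using True2 by auto
      then have j2: "j \<le> 2*s" using True by simp
      then have "j - 2 \<le> 2*s" by simp
      have v: "cf s c j = ind (r \<le> j)" "cf s c (j-1) = 0" "cf s c (j+1) = 0" "cf s c (j-2) = ind (r \<le> j - 2)"
        unfolding cf_c ind_def using True2 o1 j2 \<open>j - 2 \<le> 2*s\<close> by simp_all
      have "sigma_comb s c j = ind (r \<le> j) - ind (r \<le> j - 2)"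
        using rhs jn unfolding v by simp
      also have "\<dots> = ind (j = r)"
      proof (cases "r \<le> j")
        case True4: True
        show ?thesis
        proof (cases "r \<le> j - 2")
          case True5: True
          then show ?thesis using r by (auto simp: ind_def)
        next
          case False5: False
          then have "j = r" using par_aux1[of j r] True2 r True4 by blast
          then show ?thesis using False5 by (simp add: ind_def)
        qed
      next
        case False4: False
        then show ?thesis by (auto simp: ind_def)
      qed
      also have "ind (j = r) = ind (j = r) - ind (j = r - 1)"
      proof -
        have "odd (r - 1)" using r by (cases r) auto
        then have "j \<noteq> r - 1" using True2 by auto
        then show ?thesis by (simp add: ind_def)
      qed
      finally show ?thesis using lhs c_def by simp
    next
      case False
      have o1: "even (j-1)" "even (j+1)" using True False by auto
      have c2: "cf s c (j-2) = 0" unfolding cf_c using False r by (cases "j = 1") auto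
      show ?thesis
      proof (cases "j = 2*s+1")
        case True3: True
        have "sigma_comb s c j = 1 - 0 - 1" using rhs[unfolded c2] o1 False True3 r unfolding cf_c by simp
        moreover have "j \<noteq> r" "j \<noteq> r - 1" using True3 r by auto
        ultimately show ?thesis using lhs c_def by (simp add: ind_def)
      next
        case False3: False
        then have jj: "j + 1 \<le> 2*s" using True False by presburger
        then have jj2: "j - 1 \<le> 2*s" by simp
        have "sigma_comb s c j = ind (r \<le> j - 1) - ind (r \<le> j + 1)"
          using rhs[unfolded c2] o1 False False3 True jj jj2 unfolding cf_c by (simp add: ind_def)
        also have "\<dots> = ind (j = r) - ind (j = r - 1)"
          using False r True by (auto simp: ind_def)
        finally show ?thesis using lhs c_def by simp
      qed
    qed
  qed
qed

lemma low_violate: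
  assumes s2: "s \<ge> 2" and low: "is_low s D E F" and gam: "D + E - F = sigma_comb s b"
    and b0: "\<forall>i. b i \<ge> 0" and Dr: "D = Dv s r" and r: "even r" "2 \<le> r" "r \<le> 2*s-2"
    and big: "\<forall>i. even i \<and> r \<le> i \<and> i \<le> 2*s \<longrightarrow> b i \<ge> 1"
  shows False
proof -
  define c where "c = (\<lambda>i::nat. if even i \<and> r \<le> i \<and> i \<le> 2*s then (1::int) else 0)"
  define D' where "D' = Dv s (r-1)"
  have Dc: "D - D' = sigma_comb s c" unfolding Dr D'_def c_def by (rule Dv_drop[OF s2 r])
  have ND': "in_NDelta s D'" unfolding D'_def using r by (intro Dv_NDelta) auto
  have NE: "in_NDelta s E" using low by (simp add: is_low_def)
  have l1: "leS s D' D" unfolding leS_def in_NSigma_def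
    using Dc by (intro exI[of _ c]) (auto simp: c_def)
  have l2: "leS s E E" unfolding leS_def in_NSigma_def
    by (intro exI[of _ "\<lambda>_. 0"]) (auto simp: sigma_comb_def)
  have l3: "leS s F (D' + E)" unfolding leS_def in_NSigma_def
  proof (intro exI[of _ "\<lambda>i. b i - c i"] conjI allI)
    fix i show "0 \<le> b i - c i" using b0 big by (auto simp: c_def)
  next
    show "D' + E - F = sigma_comb s (\<lambda>i. b i - c i)"
    proof
      fix j
      have "(D' + E - F) j = (D + E - F) j - (D - D') j" by simp
      also have "\<dots> = sigma_comb s b j - sigma_comb s c j" using gam Dc by simp
      also have "\<dots> = sigma_comb s (\<lambda>i. b i - c i) j" by (simp add: sc_diff)
      finally show "(D' + E - F) j = sigma_comb s (\<lambda>i. b i - c i) j" .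
    qed
  qed
  have "D' = D" using low ND' NE l1 l2 l3 unfolding is_low_def by blast
  then have "Dv s (r-1) r = Dv s r r" unfolding D'_def Dr by simp
  moreover have "r - 1 \<noteq> r" "r \<le> 2*s+1" "1 \<le> r" using r by auto
  ultimately show False by (simp add: Dv_def)
qed

lemma sc_cong: "(\<And>i. 1 \<le> i \<Longrightarrow> i \<le> 2*s \<Longrightarrow> x i = y i) \<Longrightarrow> sigma_comb s x = sigma_comb s y"
  unfolding sigma_comb_def by (intro ext sum.cong) auto

lemma sc_interval:
  assumes "1 \<le> m"
  shows "sigma_comb s (\<lambda>i. if 2*m \<le> i then 1 else 0) = (\<lambda>j. \<Sum>i=2*m..2*s. sigma s i j)"
proof
  fix j
  have "sigma_comb s (\<lambda>i. if 2*m \<le> i then 1 else 0) j = (\<Sum>i\<in>{1..2*s}. if 2*m \<le> i then sigma s i j else 0)"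
    unfolding sigma_comb_def by (intro sum.cong) auto
  also have "\<dots> = (\<Sum>i\<in>{i\<in>{1..2*s}. 2*m \<le> i}. sigma s i j)"
    by (rule sum.inter_filter[symmetric]) simp
  also have "{i\<in>{1..2*s}. 2*m \<le> i} = {2*m..2*s}" using assms by auto
  finally show "sigma_comb s (\<lambda>i. if 2*m \<le> i then 1 else 0) j = (\<Sum>i=2*m..2*s. sigma s i j)" .
qed

lemma sc_three:
  assumes "u \<noteq> v" "u \<noteq> w" "v \<noteq> w" "1 \<le> u" "u \<le> 2*s" "1 \<le> v" "v \<le> 2*s" "1 \<le> w" "w \<le> 2*s"
  shows "sigma_comb s (\<lambda>i. if i = u then x else if i = v then y else if i = w then z else 0) j
     = x * sigma s u j + y * sigma s v j + z * sigma s w j"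
proof -
  have "sigma_comb s (\<lambda>i. if i = u then x else if i = v then y else if i = w then z else 0) j
     = (\<Sum>i\<in>{1..2*s}. (if i = u then x * sigma s u j else 0) + (if i = v then y * sigma s v j else 0) + (if i = w then z * sigma s w j else 0))"
    unfolding sigma_comb_def using assms by (intro sum.cong) auto
  also have "\<dots> = x * sigma s u j + y * sigma s v j + z * sigma s w j"
    using assms by (simp add: sum.distrib)
  finally show ?thesis .
qed

lemma ind_step: "ind (x < j+1) = ind (x < (j::nat)) + ind (j = x)"
  by (auto simp: ind_def)

lemma ind_stepl: "ind (x \<le> j+1) = ind (x \<le> (j::nat)) + ind (x = j + 1)"
  by (auto simp: ind_def)

lemma cnt_lt: "k < x \<Longrightarrow> cnt x k = 0" by (simp add: cnt_def)
lemma cnt_0: "cnt x x = 1" by (simp add: cnt_def)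
lemma cnt_1: "cnt x (x+1) = 1" by (simp add: cnt_def)
lemma cnt_2: "cnt x (x+2) = 2" by (simp add: cnt_def)
lemma cnt_diff2: "cnt x k - cnt (x+2) k = ind (x \<le> k)"
proof (cases "x + 2 \<le> k")
  case True
  then have "k - x = (k - (x+2)) + 2" by simp
  then have "(k - x) div 2 = (k - (x+2)) div 2 + 1" by simp
  then show ?thesis using True by (simp add: cnt_def ind_def)
next
  case False
  then have "(k - x) div 2 = 0" by simp
  then show ?thesis using False by (simp add: cnt_def ind_def)
qed

lemma main_le:
  assumes s2: "s \<ge> 2" and low: "is_low s D E F"
    and Dp: "D = Dv s p" and Eq: "E = Dv s q"
    and p: "1 \<le> p" "p \<le> 2*s+1" and q: "1 \<le> q" "q \<le> 2*s+1" and pq: "p \<le> q"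
    and supp: "in_suppS s (2*s) (D + E - F)"
  shows "(\<exists>m. 1 \<le> m \<and> m < s \<and> D = Dv s (2*m+1) \<and> E = Dv s (2*s)
        \<and> F = Dv s (2*m-1) + Dv s (2*s+1)
        \<and> D + E - F = (\<lambda>j. \<Sum>i=2*m..2*s. sigma s i j))
     \<or> (D = Dv s (2*s) \<and> E = Dv s (2*s) \<and> F = Dv s (2*s-3)
        \<and> D + E - F = sigma s (2*s-2) + sigma s (2*s-1) + 2 * sigma s (2*s))
     \<or> (D = Dv s (2*s) \<and> E = Dv s (2*s) \<and> F = Dv s (2*s-2)
        \<and> D + E - F = sigma s (2*s-1) + sigma s (2*s))
     \<or> (D = Dv s (2*s) \<and> E = Dv s (2*s+1) \<and> F = Dv s (2*s-1)
        \<and> D + E - F = sigma s (2*s))"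
proof -
  have NF: "in_NDelta s F" and leF: "leS s F (D + E)" using low by (auto simp: is_low_def)
  obtain b where b0: "\<forall>i. b i \<ge> 0" and gam: "D + E - F = sigma_comb s b"
    using leF unfolding leS_def in_NSigma_def by blast
  obtain a0 where a0: "D + E - F = sigma_comb s a0" "a0 (2*s) > 0"
    using supp unfolding in_suppS_def by blast
  have "b (2*s) = a0 (2*s)" using sc_unique[OF s2, of b a0 "2*s"] gam a0(1) s2 by simp
  then have b2s: "b (2*s) \<ge> 1" using a0(2) by simp
  define a' where "a' = cf s b"
  have a'pos: "a' k \<ge> 0" for k using b0 by (simp add: a'_def cf_def)
  have a'big: "a' k = 0" if "k > 2*s \<or> k = 0" for k using that by (auto simp: a'_def cf_def)
  have a'b: "a' k = b k" if "1 \<le> k" "k \<le> 2*s" for k using that by (simp add: a'_def cf_def)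
  have Fj: "F j = D j + E j - sigma_comb s b j" for j
    using fun_cong[OF gam, of j] by simp
  have Fpos: "F j \<ge> 0" for j using NF by (simp add: in_NDelta_def)
  have Fout: "F j = 0" if "\<not> (1 \<le> j \<and> j \<le> 2*s+1)" for j
    using NF that unfolding in_NDelta_def in_ZDelta_def by (metis)
  have Dj: "D j = ind (j = p)" if "1 \<le> j" "j \<le> 2*s+1" for j
    using that p by (auto simp: Dp Dv_def ind_def)
  have Ej: "E j = ind (j = q)" if "1 \<le> j" "j \<le> 2*s+1" for j
    using that q by (auto simp: Eq Dv_def ind_def)
  have Fc: "F j = ind (j = p) + ind (j = q) - (a' j + a' (j-1) - a' (j+1) - a' (j-2) - (if j = 2*s+1 then a' (2*s-2) else 0))"
    if "1 \<le> j" "j \<le> 2*s+1" for j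
    using Fj[of j] Dj[OF that] Ej[OF that] coord[OF s2, of b j] that by (simp add: a'_def)
  define e where "e = (\<lambda>k. a' k - a' (k-2))"
  define h where "h = (\<lambda>k. ind (p < k) + ind (q < k))"
  define g where "g = (\<lambda>k. e k + h k)"
  have gstep: "g (j+1) - g j = F j" if "1 \<le> j" "j \<le> 2*s" for j
  proof -
    have jj: "j + 1 - 2 = j - 1" using that by simp
    have eq1: "g (j+1) = a' (j+1) - a' (j-1) + ind (p < j) + ind (j = p) + ind (q < j) + ind (j = q)"
      unfolding g_def e_def h_def ind_step jj by simp
    have eq2: "g j = a' j - a' (j-2) + ind (p < j) + ind (q < j)"
      unfolding g_def e_def h_def by simp
    have "j \<noteq> 2*s+1" using that by simp
    then have eq3: "F j = ind (j = p) + ind (j = q) - (a' j + a' (j-1) - a' (j+1) - a' (j-2))"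
      using Fc[of j] that by simp
    show ?thesis using eq1 eq2 eq3 by linarith
  qed
  have gmono: "g j \<le> g (j+1)" if "1 \<le> j" "j < 2*s+1" for j
    using gstep[of j] Fpos[of j] that by simp
  have g1: "g 1 \<ge> 0"
  proof -
    have "h 1 = 0" using p q by (simp add: h_def ind_def)
    moreover have "e 1 = a' 1" using a'big[of 0] by (simp add: e_def)
    ultimately show ?thesis using a'pos[of 1] by (simp add: g_def)
  qed
  have gN: "g (2*s+1) \<le> 2"
  proof -
    have "h (2*s+1) \<le> 2" by (simp add: h_def ind_def)
    moreover have "e (2*s+1) \<le> 0" using a'big[of "2*s+1"] a'pos[of "2*s+1-2"] by (simp add: e_def)
    ultimately show ?thesis by (simp add: g_def)
  qed
  have gall: "0 \<le> g i \<and> g i \<le> 2" if "1 \<le> i" "i \<le> 2*s+1" for i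
  proof -
    have "g 1 \<le> g i" using mono_chain[of "2*s+1" g 1 i] gmono that by simp
    moreover have "g i \<le> g (2*s+1)" using mono_chain[of "2*s+1" g i "2*s+1"] gmono that by simp
    ultimately show ?thesis using g1 gN by simp
  qed
  have ex1: "\<exists>t. 1 \<le> t \<and> t \<le> 2*s+1+1 \<and> (\<forall>i. 1 \<le> i \<longrightarrow> i \<le> 2*s+1 \<longrightarrow> ((1::int) \<le> g i \<longleftrightarrow> t \<le> i))"
    by (rule thresh) (rule gmono)
  have ex2: "\<exists>t. 1 \<le> t \<and> t \<le> 2*s+1+1 \<and> (\<forall>i. 1 \<le> i \<longrightarrow> i \<le> 2*s+1 \<longrightarrow> ((2::int) \<le> g i \<longleftrightarrow> t \<le> i))"
    by (rule thresh) (rule gmono)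
  obtain t1 where t1': "1 \<le> t1" "t1 \<le> 2*s+1+1" "\<forall>i. 1 \<le> i \<longrightarrow> i \<le> 2*s+1 \<longrightarrow> (1 \<le> g i \<longleftrightarrow> t1 \<le> i)"
    using ex1 by blast
  obtain t2 where t2': "1 \<le> t2" "t2 \<le> 2*s+1+1" "\<forall>i. 1 \<le> i \<longrightarrow> i \<le> 2*s+1 \<longrightarrow> (2 \<le> g i \<longleftrightarrow> t2 \<le> i)"
    using ex2 by blast
  have t1: "1 \<le> t1" "t1 \<le> 2*s+2" "\<forall>i. 1 \<le> i \<longrightarrow> i \<le> 2*s+1 \<longrightarrow> (1 \<le> g i \<longleftrightarrow> t1 \<le> i)"
    using t1' by auto
  have t2: "1 \<le> t2" "t2 \<le> 2*s+2" "\<forall>i. 1 \<le> i \<longrightarrow> i \<le> 2*s+1 \<longrightarrow> (2 \<le> g i \<longleftrightarrow> t2 \<le> i)"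
    using t2' by auto
  have t12: "t1 \<le> t2"
  proof (cases "t2 \<le> 2*s+1")
    case True
    then have "2 \<le> g t2" using t2 by auto
    then have "1 \<le> g t2" by simp
    then show ?thesis using t1(3)[rule_format, of t2] t2(1) True by simp
  next
    case False
    then show ?thesis using t1 by simp
  qed
  have gform: "g i = ind (t1 \<le> i) + ind (t2 \<le> i)" if "1 \<le> i" "i \<le> 2*s+1" for i
  proof -
    have "(1 \<le> g i \<longleftrightarrow> t1 \<le> i)" "(2 \<le> g i \<longleftrightarrow> t2 \<le> i)" using t1 t2 that by auto
    then show ?thesis using gall[OF that] by (auto simp: ind_def)
  qed
  have eform: "e k = ind (t1 \<le> k) + ind (t2 \<le> k) - ind (p+1 \<le> k) - ind (q+1 \<le> k)" if "1 \<le> k" "k \<le> 2*s+1" for k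
  proof -
    have "ind (p < k) = ind (p+1 \<le> k)" "ind (q < k) = ind (q+1 \<le> k)" by (auto simp: ind_def)
    then show ?thesis using gform[OF that] by (simp add: g_def h_def)
  qed
  define A where "A = (\<lambda>k. cnt t1 k + cnt t2 k - cnt (p+1) k - cnt (q+1) k)"
  have closed: "a' k = A k" if "k \<le> 2*s+1" for k
    using that
  proof (induction k rule: less_induct)
    case (less k)
    show ?case
    proof (cases "k = 0")
      case True
      then show ?thesis using t1 t2 a'big[of 0] by (simp add: A_def cnt_def)
    next
      case False
      then have k1: "1 \<le> k" by simp
      have "a' k = a' (k-2) + e k" by (simp add: e_def)
      also have "a' (k-2) = A (k-2)" using less.IH[of "k-2"] k1 less.prems by simp
      also have "e k = ind (t1 \<le> k) + ind (t2 \<le> k) - ind (p+1 \<le> k) - ind (q+1 \<le> k)"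
        using eform k1 less.prems by simp
      also have "A (k-2) + (ind (t1 \<le> k) + ind (t2 \<le> k) - ind (p+1 \<le> k) - ind (q+1 \<le> k)) = A k"
        unfolding A_def using cnt_step[of t1 k] cnt_step[of t2 k] cnt_step[of "p+1" k] cnt_step[of "q+1" k] t1 t2 k1
        by (simp add: ind_def)
      finally show ?thesis .
    qed
  qed
  have A1: "A (2*s+1) = 0" using closed[of "2*s+1"] a'big[of "2*s+1"] by simp
  have A2: "A (2*s) \<ge> 1" using closed[of "2*s"] a'b[of "2*s"] b2s s2 by simp
  have Apos: "A k \<ge> 0" if "k \<le> 2*s+1" for k using closed[OF that] a'pos[of k] by simp
  have top: "ind (t1 \<le> 2*s) + ind (t2 \<le> 2*s) - ind (p+1 \<le> 2*s) - ind (q+1 \<le> 2*s)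
             + (ind (t1 \<le> 2*s+1) + ind (t2 \<le> 2*s+1) - ind (p+1 \<le> 2*s+1) - ind (q+1 \<le> 2*s+1))
             \<le> ind (p = 2*s+1) + ind (q = 2*s+1)"
  proof -
    have F1: "F (2*s+1) = ind (2*s+1 = p) + ind (2*s+1 = q) - (a' (2*s) - a' (2*s-1) - a' (2*s-2))"
      using Fc[of "2*s+1"] a'big[of "2*s+1"] a'big[of "2*s+2"] by simp
    have i2: "ind (2*s+1 = p) = ind (p = 2*s+1)" "ind (2*s+1 = q) = ind (q = 2*s+1)" by (auto simp: ind_def)
    have ee: "e (2*s) = a' (2*s) - a' (2*s-2)" "e (2*s+1) = - a' (2*s-1)"
      using a'big[of "2*s+1"] by (simp_all add: e_def)
    have E1: "e (2*s) = ind (t1 \<le> 2*s) + ind (t2 \<le> 2*s) - ind (p+1 \<le> 2*s) - ind (q+1 \<le> 2*s)"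
      by (rule eform) (use s2 in auto)
    have E2: "e (2*s+1) = ind (t1 \<le> 2*s+1) + ind (t2 \<le> 2*s+1) - ind (p+1 \<le> 2*s+1) - ind (q+1 \<le> 2*s+1)"
      by (rule eform) (use s2 in auto)
    show ?thesis using F1 i2 ee E1 E2 Fpos[of "2*s+1"] by linarith
  qed
  have lowp: "\<exists>k. even k \<and> p \<le> k \<and> k \<le> 2*s \<and> A k \<le> 0" if "even p" "p \<le> 2*s-2"
  proof (rule ccontr)
    assume na: "\<not> ?thesis"
    have "\<forall>i. even i \<and> p \<le> i \<and> i \<le> 2*s \<longrightarrow> b i \<ge> 1"
    proof (intro allI impI)
      fix i assume i: "even i \<and> p \<le> i \<and> i \<le> 2*s"
      then have "\<not> A i \<le> 0" using na by blast
      moreover have "b i = A i" using a'b[of i] closed[of i] i p by simp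
      ultimately show "b i \<ge> 1" by simp
    qed
    moreover have "2 \<le> p" using that p by presburger
    ultimately show False using low_violate[OF s2 low gam b0 Dp that(1)] that by blast
  qed
  have lowq: "\<exists>k. even k \<and> q \<le> k \<and> k \<le> 2*s \<and> A k \<le> 0" if "even q" "q \<le> 2*s-2"
  proof (rule ccontr)
    assume na: "\<not> ?thesis"
    have "\<forall>i. even i \<and> q \<le> i \<and> i \<le> 2*s \<longrightarrow> b i \<ge> 1"
    proof (intro allI impI)
      fix i assume i: "even i \<and> q \<le> i \<and> i \<le> 2*s"
      then have "\<not> A i \<le> 0" using na by blast
      moreover have "b i = A i" using a'b[of i] closed[of i] i q by simp
      ultimately show "b i \<ge> 1" by simp
    qed
    moreover have "2 \<le> q" using that q by presburger
    moreover have "E + D - F = sigma_comb s b" using gam by (simp add: add.commute)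
    ultimately show False using low_violate[OF s2 is_low_sym[OF low] _ b0 Eq that(1)] that by blast
  qed
  have cases: "(\<exists>m. 1 \<le> m \<and> m < s \<and> p = 2*m+1 \<and> q = 2*s \<and> t1 = 2*m \<and> t2 = 2*s+2)
       \<or> (p = 2*s \<and> q = 2*s \<and> t1 = 2*s-2 \<and> t2 = 2*s+2)
       \<or> (p = 2*s \<and> q = 2*s \<and> t1 = 2*s-1 \<and> t2 = 2*s+2)
       \<or> (p = 2*s \<and> q = 2*s+1 \<and> t1 = 2*s \<and> t2 = 2*s+2)"
    by (rule core[OF s2 t1(1) t12 t2(2) p(1) pq q(2) A_def[THEN fun_cong] A1 A2 Apos top lowp lowq])
  have Fform: "F j = ind (t1 = j+1) + ind (t2 = j+1)" if "1 \<le> j" "j \<le> 2*s" for j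
  proof -
    have "F j = g (j+1) - g j" using gstep[OF that] by simp
    also have "\<dots> = ind (t1 = j+1) + ind (t2 = j+1)"
      using gform[of j] gform[of "j+1"] that unfolding ind_stepl by simp
    finally show ?thesis .
  qed
  have F2s1: "F (2*s+1) = ind (2*s+1 = p) + ind (2*s+1 = q) - (a' (2*s) - a' (2*s-1) - a' (2*s-2))"
    using Fc[of "2*s+1"] a'big[of "2*s+1"] a'big[of "2*s+2"] by simp
  have bA: "b i = A i" if "1 \<le> i" "i \<le> 2*s" for i using a'b[OF that] closed[of i] that by simp
  from cases show ?thesis
  proof (elim disjE exE conjE)
    fix m assume m: "1 \<le> m" "m < s" "p = 2*m+1" "q = 2*s" "t1 = 2*m" "t2 = 2*s+2"
    have bv: "b i = (if 2*m \<le> i then 1 else 0)" if "1 \<le> i" "i \<le> 2*s" for i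
    proof -
      have "b i = cnt (2*m) i + cnt (2*s+2) i - cnt (2*m+2) i - cnt (2*s+1) i"
        using bA[OF that] m by (simp add: A_def)
      also have "\<dots> = (if 2*m \<le> i then 1 else 0)"
        using that cnt_diff2[of "2*m" i] cnt_lt[of i "2*s+2"] cnt_lt[of i "2*s+1"] by (simp add: ind_def)
      finally show ?thesis .
    qed
    have a'v: "a' (2*s) = 1" "a' (2*s-1) = 1" "a' (2*s-2) = 1"
      using a'b[of "2*s"] a'b[of "2*s-1"] a'b[of "2*s-2"] bv[of "2*s"] bv[of "2*s-1"] bv[of "2*s-2"] m s2 by auto
    have Fv: "F = Dv s (2*m-1) + Dv s (2*s+1)"
    proof
      fix j
      consider "1 \<le> j \<and> j \<le> 2*s" | "j = 2*s+1" | "\<not> (1 \<le> j \<and> j \<le> 2*s+1)" by linarith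
      then show "F j = (Dv s (2*m-1) + Dv s (2*s+1)) j"
      proof cases
        case 1 then show ?thesis using Fform[of j] m by (auto simp: Dv_def ind_def)
      next
        case 2 then show ?thesis using F2s1 a'v m by (auto simp: Dv_def ind_def)
      next
        case 3 then show ?thesis using Fout[of j] m by (auto simp: Dv_def)
      qed
    qed
    have Gv: "D + E - F = (\<lambda>j. \<Sum>i=2*m..2*s. sigma s i j)"
      using gam sc_cong[of s b "\<lambda>i. if 2*m \<le> i then 1 else 0", OF bv] sc_interval[OF m(1)] by simp
    show ?thesis using m Fv Gv Dp Eq by blast
  next
    assume m: "p = 2*s" "q = 2*s" "t1 = 2*s-2" "t2 = 2*s+2"
    have bv: "b i = (if i = 2*s-2 then 1 else if i = 2*s-1 then 1 else if i = 2*s then 2 else 0)" if "1 \<le> i" "i \<le> 2*s" for i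
    proof -
      have "b i = cnt (2*s-2) i + cnt (2*s+2) i - cnt (2*s+1) i - cnt (2*s+1) i"
        using bA[OF that] m by (simp add: A_def)
      also have "\<dots> = (if i = 2*s-2 then 1 else if i = 2*s-1 then 1 else if i = 2*s then 2 else 0)"
      proof -
        have z: "cnt (2*s+2) i = 0" "cnt (2*s+1) i = 0" using that by (simp_all add: cnt_lt)
        have w: "2*s-1 = (2*s-2)+1" "2*s = (2*s-2)+2" using s2 by auto
        have "i < 2*s-2 \<or> i = 2*s-2 \<or> i = 2*s-1 \<or> i = 2*s" using that by arith
        then consider "i < 2*s-2" | "i = 2*s-2" | "i = 2*s-1" | "i = 2*s" by blast
        then show ?thesis
        proof cases
          case 1 then show ?thesis using z cnt_lt[of i "2*s-2"] s2 by (simp; arith)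
        next
          case 2 then show ?thesis using z cnt_0[of "2*s-2"] s2 by simp
        next
          case 3 then show ?thesis using z cnt_1[of "2*s-2"] s2 w by simp
        next
          case 4 then show ?thesis using z cnt_2[of "2*s-2"] s2 w by simp
        qed
      qed
      finally show ?thesis .
    qed
    have a'v: "a' (2*s) = 2" "a' (2*s-1) = 1" "a' (2*s-2) = 1"
      using a'b[of "2*s"] a'b[of "2*s-1"] a'b[of "2*s-2"] bv[of "2*s"] bv[of "2*s-1"] bv[of "2*s-2"] s2 by auto
    have Fv: "F = Dv s (2*s-3)"
    proof
      fix j
      consider "1 \<le> j \<and> j \<le> 2*s" | "j = 2*s+1" | "\<not> (1 \<le> j \<and> j \<le> 2*s+1)" by linarith
      then show "F j = Dv s (2*s-3) j"
      proof cases
        case 1 then show ?thesis using Fform[of j] m s2 by (auto simp: Dv_def ind_def)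
      next
        case 2 then show ?thesis using F2s1 a'v m by (auto simp: Dv_def ind_def)
      next
        case 3 then show ?thesis using Fout[of j] by (auto simp: Dv_def)
      qed
    qed
    have Gv: "D + E - F = sigma s (2*s-2) + sigma s (2*s-1) + 2 * sigma s (2*s)"
    proof
      fix j
      have "(D + E - F) j = sigma_comb s (\<lambda>i. if i = 2*s-2 then 1 else if i = 2*s-1 then 1 else if i = 2*s then 2 else 0) j"
        using gam sc_cong[of s b, OF bv] by simp
      also have "\<dots> = 1 * sigma s (2*s-2) j + 1 * sigma s (2*s-1) j + 2 * sigma s (2*s) j"
        by (rule sc_three) (use s2 in auto)
      finally show "(D + E - F) j = (sigma s (2*s-2) + sigma s (2*s-1) + 2 * sigma s (2*s)) j" by simp
    qed
    show ?thesis using m Fv Gv Dp Eq by blast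
  next
    assume m: "p = 2*s" "q = 2*s" "t1 = 2*s-1" "t2 = 2*s+2"
    have bv: "b i = (if i = 2*s-1 then 1 else if i = 2*s then 1 else if i = 2*s-2 then 0 else 0)" if "1 \<le> i" "i \<le> 2*s" for i
    proof -
      have "b i = cnt (2*s-1) i + cnt (2*s+2) i - cnt (2*s+1) i - cnt (2*s+1) i"
        using bA[OF that] m by (simp add: A_def)
      also have "\<dots> = (if i = 2*s-1 then 1 else if i = 2*s then 1 else if i = 2*s-2 then 0 else 0)"
      proof -
        have z: "cnt (2*s+2) i = 0" "cnt (2*s+1) i = 0" using that by (simp_all add: cnt_lt)
        have w: "2*s = (2*s-1)+1" using s2 by auto
        have "i < 2*s-1 \<or> i = 2*s-1 \<or> i = 2*s" using that by arith
        then consider "i < 2*s-1" | "i = 2*s-1" | "i = 2*s" by blast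
        then show ?thesis
        proof cases
          case 1 then show ?thesis using z cnt_lt[of i "2*s-1"] by auto
        next
          case 2 then show ?thesis using z cnt_0[of "2*s-1"] s2 by simp
        next
          case 3 then show ?thesis using z cnt_1[of "2*s-1"] s2 w by simp
        qed
      qed
      finally show ?thesis .
    qed
    have a'v: "a' (2*s) = 1" "a' (2*s-1) = 1" "a' (2*s-2) = 0"
      using a'b[of "2*s"] a'b[of "2*s-1"] a'b[of "2*s-2"] bv[of "2*s"] bv[of "2*s-1"] bv[of "2*s-2"] s2 by auto
    have Fv: "F = Dv s (2*s-2)"
    proof
      fix j
      consider "1 \<le> j \<and> j \<le> 2*s" | "j = 2*s+1" | "\<not> (1 \<le> j \<and> j \<le> 2*s+1)" by linarith
      then show "F j = Dv s (2*s-2) j"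
      proof cases
        case 1 then show ?thesis using Fform[of j] m s2 by (auto simp: Dv_def ind_def)
      next
        case 2 then show ?thesis using F2s1 a'v m by (auto simp: Dv_def ind_def)
      next
        case 3 then show ?thesis using Fout[of j] by (auto simp: Dv_def)
      qed
    qed
    have Gv: "D + E - F = sigma s (2*s-1) + sigma s (2*s)"
    proof
      fix j
      have "(D + E - F) j = sigma_comb s (\<lambda>i. if i = 2*s-1 then 1 else if i = 2*s then 1 else if i = 2*s-2 then 0 else 0) j"
        using gam sc_cong[of s b, OF bv] by simp
      also have "\<dots> = 1 * sigma s (2*s-1) j + 1 * sigma s (2*s) j + 0 * sigma s (2*s-2) j"
        by (rule sc_three) (use s2 in auto)
      finally show "(D + E - F) j = (sigma s (2*s-1) + sigma s (2*s)) j" by simp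
    qed
    show ?thesis using m Fv Gv Dp Eq by blast
  next
    assume m: "p = 2*s" "q = 2*s+1" "t1 = 2*s" "t2 = 2*s+2"
    have bv: "b i = (if i = 2*s then 1 else if i = 2*s-1 then 0 else if i = 2*s-2 then 0 else 0)" if "1 \<le> i" "i \<le> 2*s" for i
    proof -
      have "b i = cnt (2*s) i + cnt (2*s+2) i - cnt (2*s+1) i - cnt (2*s+2) i"
        using bA[OF that] m by (simp add: A_def)
      also have "\<dots> = (if i = 2*s then 1 else if i = 2*s-1 then 0 else if i = 2*s-2 then 0 else 0)"
      proof -
        have z: "cnt (2*s+2) i = 0" "cnt (2*s+1) i = 0" using that by (simp_all add: cnt_lt)
        have "i < 2*s \<or> i = 2*s" using that by arith
        then consider "i < 2*s" | "i = 2*s" by blast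
        then show ?thesis
        proof cases
          case 1 then show ?thesis using z cnt_lt[of i "2*s"] by auto
        next
          case 2 then show ?thesis using z cnt_0[of "2*s"] by simp
        qed
      qed
      finally show ?thesis .
    qed
    have a'v: "a' (2*s) = 1" "a' (2*s-1) = 0" "a' (2*s-2) = 0"
      using a'b[of "2*s"] a'b[of "2*s-1"] a'b[of "2*s-2"] bv[of "2*s"] bv[of "2*s-1"] bv[of "2*s-2"] s2 by auto
    have Fv: "F = Dv s (2*s-1)"
    proof
      fix j
      consider "1 \<le> j \<and> j \<le> 2*s" | "j = 2*s+1" | "\<not> (1 \<le> j \<and> j \<le> 2*s+1)" by linarith
      then show "F j = Dv s (2*s-1) j"
      proof cases
        case 1 then show ?thesis using Fform[of j] m s2 by (auto simp: Dv_def ind_def)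
      next
        case 2 then show ?thesis using F2s1 a'v m by (auto simp: Dv_def ind_def)
      next
        case 3 then show ?thesis using Fout[of j] by (auto simp: Dv_def)
      qed
    qed
    have Gv: "D + E - F = sigma s (2*s)"
    proof
      fix j
      have "(D + E - F) j = sigma_comb s (\<lambda>i. if i = 2*s then 1 else if i = 2*s-1 then 0 else if i = 2*s-2 then 0 else 0) j"
        using gam sc_cong[of s b, OF bv] by simp
      also have "\<dots> = 1 * sigma s (2*s) j + 0 * sigma s (2*s-1) j + 0 * sigma s (2*s-2) j"
        by (rule sc_three) (use s2 in auto)
      finally show "(D + E - F) j = sigma s (2*s) j" by simp
    qed
    show ?thesis using m Fv Gv Dp Eq by blast
  qed
qed

theorem lemma2p13:
  fixes s :: nat and D E F :: zvec
  assumes "s \<ge> 2"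
    and "is_low s D E F" and "is_fundamental s D E F"
    and "in_suppS s (2*s) (D + E - F)"
  shows "\<exists>D1 E1. ((D1 = D \<and> E1 = E) \<or> (D1 = E \<and> E1 = D)) \<and>
    ((\<exists>m. 1 \<le> m \<and> m < s \<and> D1 = Dv s (2*m+1) \<and> E1 = Dv s (2*s)
        \<and> F = Dv s (2*m-1) + Dv s (2*s+1)
        \<and> D + E - F = (\<lambda>j. \<Sum>i=2*m..2*s. sigma s i j))
     \<or> (D1 = Dv s (2*s) \<and> E1 = Dv s (2*s) \<and> F = Dv s (2*s-3)
        \<and> D + E - F = sigma s (2*s-2) + sigma s (2*s-1) + 2 * sigma s (2*s))
     \<or> (D1 = Dv s (2*s) \<and> E1 = Dv s (2*s) \<and> F = Dv s (2*s-2)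
        \<and> D + E - F = sigma s (2*s-1) + sigma s (2*s))
     \<or> (D1 = Dv s (2*s) \<and> E1 = Dv s (2*s+1) \<and> F = Dv s (2*s-1)
        \<and> D + E - F = sigma s (2*s)))"
proof -
  obtain p where p: "1 \<le> p" "p \<le> 2*s+1" "D = Dv s p"
    using assms(3) unfolding is_fundamental_def in_Delta_def by blast
  obtain q where q: "1 \<le> q" "q \<le> 2*s+1" "E = Dv s q"
    using assms(3) unfolding is_fundamental_def in_Delta_def by blast
  show ?thesis
  proof (cases "p \<le> q")
    case True
    have r: "(\<exists>m. 1 \<le> m \<and> m < s \<and> D = Dv s (2*m+1) \<and> E = Dv s (2*s)
        \<and> F = Dv s (2*m-1) + Dv s (2*s+1)
        \<and> D + E - F = (\<lambda>j. \<Sum>i=2*m..2*s. sigma s i j))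
     \<or> (D = Dv s (2*s) \<and> E = Dv s (2*s) \<and> F = Dv s (2*s-3)
        \<and> D + E - F = sigma s (2*s-2) + sigma s (2*s-1) + 2 * sigma s (2*s))
     \<or> (D = Dv s (2*s) \<and> E = Dv s (2*s) \<and> F = Dv s (2*s-2)
        \<and> D + E - F = sigma s (2*s-1) + sigma s (2*s))
     \<or> (D = Dv s (2*s) \<and> E = Dv s (2*s+1) \<and> F = Dv s (2*s-1)
        \<and> D + E - F = sigma s (2*s))"
      by (rule main_le[OF assms(1) assms(2) p(3) q(3) p(1) p(2) q(1) q(2) True assms(4)])
    show ?thesis
      by (rule exI[of _ D], rule exI[of _ E]) (use r in blast)
  next
    case False
    have low': "is_low s E D F" by (rule is_low_sym[OF assms(2)])
    have ED: "E + D - F = D + E - F" by (simp add: add.commute)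
    have supp': "in_suppS s (2*s) (E + D - F)" using assms(4) unfolding ED .
    have r: "(\<exists>m. 1 \<le> m \<and> m < s \<and> E = Dv s (2*m+1) \<and> D = Dv s (2*s)
        \<and> F = Dv s (2*m-1) + Dv s (2*s+1)
        \<and> E + D - F = (\<lambda>j. \<Sum>i=2*m..2*s. sigma s i j))
     \<or> (E = Dv s (2*s) \<and> D = Dv s (2*s) \<and> F = Dv s (2*s-3)
        \<and> E + D - F = sigma s (2*s-2) + sigma s (2*s-1) + 2 * sigma s (2*s))
     \<or> (E = Dv s (2*s) \<and> D = Dv s (2*s) \<and> F = Dv s (2*s-2)
        \<and> E + D - F = sigma s (2*s-1) + sigma s (2*s))
     \<or> (E = Dv s (2*s) \<and> D = Dv s (2*s+1) \<and> F = Dv s (2*s-1)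
        \<and> E + D - F = sigma s (2*s))"
      using False by (intro main_le[OF assms(1) low' q(3) p(3) q(1) q(2) p(1) p(2) _ supp']) simp
    show ?thesis
      by (rule exI[of _ E], rule exI[of _ D]) (use r[unfolded ED] in blast)
  qed
qed

end
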